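(* Let $\mathcal S$ be a trajectory set satisfying $\bar\sigma(0)\ge0$. Then the hedging price integral in the sense of Leinert $\int_{(L)}:\mathcal L^1_{(L)}\to\mathbb R$ is linear, positive (i.e. $\int_{(L)}f\ge0$ whenever $f\in\mathcal L^1_{(L)}$ and $f\ge0$ on $\mathcal S$), continuous with respect to $\|\cdot\|$, and constant-preserving (i.e. $\int_{(L)}c=c$ for every constant function $c\in\mathbb R$).
   Context: Fix $s_0\in\mathbb R$. A trajectory set is any set $\mathcal S$ of real sequences $S=(S_j)_{j\in\mathbb N_0}$ with $S_0=s_0$. A simple portfolio $(V,n,H)$ consists of $V\in\mathbb R$, $n\in\mathbb N$ and nonanticipating functions $H_i:\mathcal S\to\mathbb R$, $0\le i\le n-1$ (i.e. $H_i(S)=h_i(S_0,\dots,S_i)$ for some arbitrary $h_i:\mathbb R^{i+1}\to\mathbb R$). Its wealth is $\Pi^{V,n,H}_j(S)=V+\sum_{i=0}^{\min\{j,n\}-1}H_i(S)(S_{i+1}-S_i)$ and $\Pi^{V,n,H}_\infty:=\Pi^{V,n,H}_n$; it is positive if $V\ge0$ and $\Pi^{V,n,H}_\infty\ge0$ on $\mathcal S$. A generalized portfolio is a sequence $(V_m,n_m,H_m)_{m\in\mathbb N_0}$ of simple portfolios, positive for every $m\ge1$; it is a positive generalized portfolio if moreover $\Pi^{V_0,n_0,H_0}_j\equiv0$ for all $j$. A map $f:\mathcal S\to[-\infty,+\infty]$ is superhedged with initial endowment $V=\sum_{m=0}^\infty V_m\in(-\infty,+\infty]$ by such a portfolio if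 $f\le\sum_{m=0}^\infty\Pi^{V_m,n_m,H_m}_\infty$ on $\mathcal S$. For $f\ge0$, $\bar I(f)$ is the infimum of initial endowments of positive generalized portfolios superhedging $f$; $\bar\sigma(f)$ is the infimum of initial endowments of generalized portfolios superhedging $f$. Let $\mathcal E=\{\Pi^{V,n,H}_\infty\}$ (over all simple portfolios). Under $\bar\sigma(0)\ge0$, the map $I(\Pi^{V,n,H}_\infty):=V$ is a well-defined linear functional on $\mathcal E$. Define $\|f\|:=\bar I(|f|)$ for $f:\mathcal S\to[-\infty,+\infty]$; let $\mathcal F$ be the space of real-valued $f$ with $\|f\|<\infty$ (a complete seminormed space) and $\mathcal E'=\{f\in\mathcal E:\|f\|<\infty\}$. Under $\bar\sigma(0)\ge0$, $I$ restricted to $\mathcal E'$ is continuous for $\|\cdot\|$; $\mathcal L^1_{(L)}$ denotes the closure of $\mathcal E'$ in $\mathcal F$ with respect to $\|\cdot\|$, and $\int_{(L)}$ the unique $\|\cdot\|$-continuous linear extension of $I|_{\mathcal E'}$ to $\mathcal L^1_{(L)}$. *)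

theory Defs
  imports "HOL-Analysis.Analysis"
begin

type_synonym traj = "nat \<Rightarrow> real"

definition trajectory_set :: "real \<Rightarrow> traj set \<Rightarrow> bool" where
  "trajectory_set s0 \<S> \<longleftrightarrow> (\<forall>S\<in>\<S>. S 0 = s0)"

definition nonanticipating :: "traj set \<Rightarrow> nat \<Rightarrow> (nat \<Rightarrow> traj \<Rightarrow> real) \<Rightarrow> bool" where
  "nonanticipating \<S> n H \<longleftrightarrow>
     (\<forall>i<n. \<forall>S\<in>\<S>. \<forall>S'\<in>\<S>. (\<forall>j\<le>i. S j = S' j) \<longrightarrow> H i S = H i S')"

text \<open>(V,n,H) is a simple portfolio (V is an arbitrary real), n in {1,2,...}.\<close>
definition simple_portfolio :: "traj set \<Rightarrow> nat \<Rightarrow> (nat \<Rightarrow> traj \<Rightarrow> real) \<Rightarrow> bool" where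
  "simple_portfolio \<S> n H \<longleftrightarrow> n \<ge> 1 \<and> nonanticipating \<S> n H"

definition wealth :: "real \<Rightarrow> nat \<Rightarrow> (nat \<Rightarrow> traj \<Rightarrow> real) \<Rightarrow> nat \<Rightarrow> traj \<Rightarrow> real" where
  "wealth V n H j S = V + (\<Sum>i<min j n. H i S * (S (Suc i) - S i))"

definition wealth_inf :: "real \<Rightarrow> nat \<Rightarrow> (nat \<Rightarrow> traj \<Rightarrow> real) \<Rightarrow> traj \<Rightarrow> real" where
  "wealth_inf V n H S = wealth V n H n S"

definition positive_sp :: "traj set \<Rightarrow> real \<Rightarrow> nat \<Rightarrow> (nat \<Rightarrow> traj \<Rightarrow> real) \<Rightarrow> bool" where
  "positive_sp \<S> V n H \<longleftrightarrow> V \<ge> 0 \<and> (\<forall>S\<in>\<S>. wealth_inf V n H S \<ge> 0)"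

definition gen_portfolio ::
  "traj set \<Rightarrow> (nat \<Rightarrow> real) \<Rightarrow> (nat \<Rightarrow> nat) \<Rightarrow> (nat \<Rightarrow> nat \<Rightarrow> traj \<Rightarrow> real) \<Rightarrow> bool" where
  "gen_portfolio \<S> V n H \<longleftrightarrow>
     (\<forall>m. simple_portfolio \<S> (n m) (H m)) \<and> (\<forall>m\<ge>1. positive_sp \<S> (V m) (n m) (H m))"

definition pos_gen_portfolio ::
  "traj set \<Rightarrow> (nat \<Rightarrow> real) \<Rightarrow> (nat \<Rightarrow> nat) \<Rightarrow> (nat \<Rightarrow> nat \<Rightarrow> traj \<Rightarrow> real) \<Rightarrow> bool" where
  "pos_gen_portfolio \<S> V n H \<longleftrightarrow>
     gen_portfolio \<S> V n H \<and> (\<forall>j. \<forall>S\<in>\<S>. wealth (V 0) (n 0) (H 0) j S = 0)"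

text \<open>Initial endowment V_0 + sum_{m\<ge>1} V_m in (-inf, +inf] (terms for m \<ge> 1 are \<ge> 0).\<close>
definition endowment :: "(nat \<Rightarrow> real) \<Rightarrow> ereal" where
  "endowment V = ereal (V 0) + (\<Sum>m. ereal (V (Suc m)))"

definition gp_value ::
  "(nat \<Rightarrow> real) \<Rightarrow> (nat \<Rightarrow> nat) \<Rightarrow> (nat \<Rightarrow> nat \<Rightarrow> traj \<Rightarrow> real) \<Rightarrow> traj \<Rightarrow> ereal" where
  "gp_value V n H S = ereal (wealth_inf (V 0) (n 0) (H 0) S)
      + (\<Sum>m. ereal (wealth_inf (V (Suc m)) (n (Suc m)) (H (Suc m)) S))"

definition superhedges ::
  "traj set \<Rightarrow> (traj \<Rightarrow> ereal) \<Rightarrow> (nat \<Rightarrow> real) \<Rightarrow> (nat \<Rightarrow> nat) \<Rightarrow> (nat \<Rightarrow> nat \<Rightarrow> traj \<Rightarrow> real) \<Rightarrow> bool" where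
  "superhedges \<S> f V n H \<longleftrightarrow> (\<forall>S\<in>\<S>. f S \<le> gp_value V n H S)"

definition Ibar :: "traj set \<Rightarrow> (traj \<Rightarrow> ereal) \<Rightarrow> ereal" where
  "Ibar \<S> f = Inf {endowment V | V n H. pos_gen_portfolio \<S> V n H \<and> superhedges \<S> f V n H}"

definition sigma_bar :: "traj set \<Rightarrow> (traj \<Rightarrow> ereal) \<Rightarrow> ereal" where
  "sigma_bar \<S> f = Inf {endowment V | V n H. gen_portfolio \<S> V n H \<and> superhedges \<S> f V n H}"

definition in_E :: "traj set \<Rightarrow> (traj \<Rightarrow> real) \<Rightarrow> bool" where
  "in_E \<S> f \<longleftrightarrow> (\<exists>V n H. simple_portfolio \<S> n H \<and> (\<forall>S\<in>\<S>. f S = wealth_inf V n H S))"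

definition I_E :: "traj set \<Rightarrow> (traj \<Rightarrow> real) \<Rightarrow> real" where
  "I_E \<S> f = (THE V. \<exists>n H. simple_portfolio \<S> n H \<and> (\<forall>S\<in>\<S>. f S = wealth_inf V n H S))"

definition normL :: "traj set \<Rightarrow> (traj \<Rightarrow> real) \<Rightarrow> ereal" where
  "normL \<S> f = Ibar \<S> (\<lambda>S. ereal \<bar>f S\<bar>)"

definition in_E' :: "traj set \<Rightarrow> (traj \<Rightarrow> real) \<Rightarrow> bool" where
  "in_E' \<S> f \<longleftrightarrow> in_E \<S> f \<and> normL \<S> f < \<infinity>"

text \<open>L^1_(L): closure of E' in F = {f real-valued, ||f|| < inf}.\<close>
definition L1_L :: "traj set \<Rightarrow> (traj \<Rightarrow> real) \<Rightarrow> bool" where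
  "L1_L \<S> f \<longleftrightarrow> normL \<S> f < \<infinity> \<and>
     (\<forall>\<epsilon>>0. \<exists>g. in_E' \<S> g \<and> normL \<S> (\<lambda>S. f S - g S) < ereal \<epsilon>)"

text \<open>The continuous extension of I: limit of I(g_k) along g_k in E' with ||f - g_k|| \<rightarrow> 0.\<close>
definition integral_L :: "traj set \<Rightarrow> (traj \<Rightarrow> real) \<Rightarrow> real" where
  "integral_L \<S> f = (THE c. \<exists>g. (\<forall>k. in_E' \<S> (g k)) \<and>
       ((\<lambda>k. normL \<S> (\<lambda>S. f S - g k S)) \<longlonglongrightarrow> 0) \<and>
       ((\<lambda>k. I_E \<S> (g k)) \<longlonglongrightarrow> c))"

end

theory Submission imports Defs begin

definition combH :: "real \<Rightarrow> nat \<Rightarrow> (nat \<Rightarrow> traj \<Rightarrow> real) \<Rightarrow> real \<Rightarrow> nat \<Rightarrow> (nat \<Rightarrow> traj \<Rightarrow> real) \<Rightarrow> nat \<Rightarrow> traj \<Rightarrow> real" where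
  "combH a n H b n' H' i S = a * (if i < n then H i S else 0) + b * (if i < n' then H' i S else 0)"

lemma sum_trunc:
  assumes "n \<le> (N::nat)"
  shows "(\<Sum>i<min j N. (if i < n then X i else 0)) = (\<Sum>i<min j n. (X i::real))"
proof -
  have "(\<Sum>i<min j N. (if i < n then X i else 0)) = sum X {i\<in>{..<min j N}. i < n}"
    using sum.inter_filter[of "{..<min j N}" X "\<lambda>i. i<n"] by simp
  also have "{i\<in>{..<min j N}. i < n} = {..<min j n}" using assms by auto
  finally show ?thesis .
qed

lemma wealth_comb:
  "wealth (a*V + b*V') (max n n') (combH a n H b n' H') j S = a * wealth V n H j S + b * wealth V' n' H' j S"
proof -
  have "(\<Sum>i<min j (max n n'). combH a n H b n' H' i S * (S (Suc i) - S i))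
     = a * (\<Sum>i<min j (max n n'). (if i < n then H i S * (S (Suc i) - S i) else 0))
       + b * (\<Sum>i<min j (max n n'). (if i < n' then H' i S * (S (Suc i) - S i) else 0))"
  proof -
    have "\<And>i. combH a n H b n' H' i S * (S (Suc i) - S i) = a * (if i < n then H i S * (S (Suc i) - S i) else 0)
       + b * (if i < n' then H' i S * (S (Suc i) - S i) else 0)"
      by (simp add: combH_def algebra_simps)
    then show ?thesis by (simp add: sum.distrib sum_distrib_left)
  qed
  also have "\<dots> = a * (\<Sum>i<min j n. H i S * (S (Suc i) - S i)) + b * (\<Sum>i<min j n'. H' i S * (S (Suc i) - S i))"
    by (simp add: sum_trunc)
  finally show ?thesis unfolding wealth_def by (simp add: algebra_simps)
qed

lemma wealth_ge: "n \<le> j \<Longrightarrow> wealth V n H j S = wealth_inf V n H S"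
  by (simp add: wealth_def wealth_inf_def min_absorb2)

lemma wealth_inf_comb:
  "wealth_inf (a*V + b*V') (max n n') (combH a n H b n' H') S = a * wealth_inf V n H S + b * wealth_inf V' n' H' S"
  unfolding wealth_inf_def wealth_comb by (simp add: wealth_ge wealth_inf_def[symmetric])

lemma simple_comb:
  "simple_portfolio \<S> n H \<Longrightarrow> simple_portfolio \<S> n' H' \<Longrightarrow> simple_portfolio \<S> (max n n') (combH a n H b n' H')"
proof -
  assume a: "simple_portfolio \<S> n H" "simple_portfolio \<S> n' H'"
  have "nonanticipating \<S> (max n n') (combH a n H b n' H')"
    unfolding nonanticipating_def
  proof (intro allI impI ballI)
    fix i S S' assume i: "i < max n n'" and S: "S \<in> \<S>" "S' \<in> \<S>" and eq: "\<forall>j\<le>i. S j = S' j"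
    have 1: "(if i < n then H i S else 0) = (if i < n then H i S' else 0)"
      proof (cases "i < n")
      case True
      then have "H i S = H i S'" using a(1) S eq unfolding simple_portfolio_def nonanticipating_def by blast
      then show ?thesis by simp
    qed simp
    have 2: "(if i < n' then H' i S else 0) = (if i < n' then H' i S' else 0)"
      proof (cases "i < n'")
      case True
      then have "H' i S = H' i S'" using a(2) S eq unfolding simple_portfolio_def nonanticipating_def by blast
      then show ?thesis by simp
    qed simp
    show "combH a n H b n' H' i S = combH a n H b n' H' i S'"
      unfolding combH_def using 1 2 by simp
  qed
  moreover have "1 \<le> max n n'" using a(1) unfolding simple_portfolio_def by (simp add: le_max_iff_disj)
  ultimately show ?thesis unfolding simple_portfolio_def by simp
qed


definition hedgeh :: "traj set \<Rightarrow> (traj \<Rightarrow> real) \<Rightarrow> real \<Rightarrow> bool" where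
  "hedgeh \<S> h x \<longleftrightarrow> (\<exists>V n H. pos_gen_portfolio \<S> V n H \<and> superhedges \<S> (\<lambda>S. ereal (h S)) V n H
      \<and> endowment V \<le> ereal x)"

lemma suminf_ereal0[simp]: "(\<Sum>m::nat. ereal 0) = 0"
  by (simp add: zero_ereal_def[symmetric])

lemma nonempty:
  assumes "sigma_bar \<S> (\<lambda>S. 0) \<ge> 0"
  shows "\<S> \<noteq> {}"
proof
  assume e: "\<S> = {}"
  let ?V = "\<lambda>m::nat. if m = 0 then (-1::real) else 0"
  have "gen_portfolio \<S> ?V (\<lambda>_. 1) (\<lambda>_ _ _. 0)"
    using e by (simp add: gen_portfolio_def simple_portfolio_def nonanticipating_def positive_sp_def)
  moreover have "superhedges \<S> (\<lambda>S. 0) ?V (\<lambda>_. 1) (\<lambda>_ _ _. 0)"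
    using e by (simp add: superhedges_def)
  ultimately have "sigma_bar \<S> (\<lambda>S. 0) \<le> endowment ?V"
    unfolding sigma_bar_def by (intro Inf_lower) blast
  also have "endowment ?V = -1" by (simp add: endowment_def one_ereal_def)
  finally have "sigma_bar \<S> (\<lambda>S. 0) \<le> -1" .
  with assms have "(0::ereal) \<le> -1" by (rule order_trans)
  then show False by (simp add: one_ereal_def)
qed

lemma pgp_V0:
  assumes "\<S> \<noteq> {}" "pos_gen_portfolio \<S> V n H"
  shows "V 0 = 0"
proof -
  obtain S where "S \<in> \<S>" using assms by blast
  then have "wealth (V 0) (n 0) (H 0) 0 S = 0" using assms(2) by (simp add: pos_gen_portfolio_def)
  then show ?thesis by (simp add: wealth_def)
qed

lemma pgp_w0:
  assumes "pos_gen_portfolio \<S> V n H" "S \<in> \<S>"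
  shows "wealth_inf (V 0) (n 0) (H 0) S = 0"
  using assms by (simp add: pos_gen_portfolio_def wealth_inf_def)

lemma pgp_nonneg:
  assumes "pos_gen_portfolio \<S> V n H"
  shows "0 \<le> V (Suc m)" "S \<in> \<S> \<Longrightarrow> 0 \<le> wealth_inf (V (Suc m)) (n (Suc m)) (H (Suc m)) S"
  using assms by (auto simp: pos_gen_portfolio_def gen_portfolio_def positive_sp_def)

lemma endow_pgp:
  assumes "\<S> \<noteq> {}" "pos_gen_portfolio \<S> V n H"
  shows "endowment V = (\<Sum>m. ereal (V (Suc m)))"
  using pgp_V0[OF assms] by (simp add: endowment_def)

lemma superhedge_pgp:
  assumes "pos_gen_portfolio \<S> V n H" "superhedges \<S> (\<lambda>S. ereal (h S)) V n H" "S \<in> \<S>"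
  shows "ereal (h S) \<le> (\<Sum>m. ereal (wealth_inf (V (Suc m)) (n (Suc m)) (H (Suc m)) S))"
proof -
  have "ereal (h S) \<le> gp_value V n H S" using assms(2,3) unfolding superhedges_def by blast
  then show ?thesis using pgp_w0[OF assms(1,3)] by (simp add: gp_value_def zero_ereal_def[symmetric])
qed

lemma hedgeh_zero:
  assumes "\<And>S. S \<in> \<S> \<Longrightarrow> h S \<le> 0"
  shows "hedgeh \<S> h 0"
proof -
  have "pos_gen_portfolio \<S> (\<lambda>_. 0) (\<lambda>_. 1) (\<lambda>_ _ _. 0)"
    by (simp add: pos_gen_portfolio_def gen_portfolio_def simple_portfolio_def nonanticipating_def
        positive_sp_def wealth_inf_def wealth_def)
  moreover have "superhedges \<S> (\<lambda>S. ereal (h S)) (\<lambda>_. 0) (\<lambda>_. 1) (\<lambda>_ _ _. 0)"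
    using assms by (simp add: superhedges_def gp_value_def wealth_inf_def wealth_def)
  moreover have "endowment (\<lambda>_. 0) \<le> ereal 0" by (simp add: endowment_def)
  ultimately show ?thesis unfolding hedgeh_def by blast
qed

lemma hedgeh_const:
  assumes "\<And>S. S \<in> \<S> \<Longrightarrow> h S \<le> c" "0 \<le> c"
  shows "hedgeh \<S> h c"
proof -
  let ?V = "\<lambda>m::nat. if m = 1 then c else 0"
  have s: "(\<Sum>m. ereal (?V (Suc m))) = ereal c"
    by (subst suminf_finite[of "{0}"]) auto
  have "pos_gen_portfolio \<S> ?V (\<lambda>_. 1) (\<lambda>_ _ _. 0)"
    using assms by (simp add: pos_gen_portfolio_def gen_portfolio_def simple_portfolio_def nonanticipating_def
        positive_sp_def wealth_inf_def wealth_def)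
  moreover have "superhedges \<S> (\<lambda>S. ereal (h S)) ?V (\<lambda>_. 1) (\<lambda>_ _ _. 0)"
    using assms s by (simp add: superhedges_def gp_value_def wealth_inf_def wealth_def)
  moreover have "endowment ?V \<le> ereal c" using s by (simp add: endowment_def)
  ultimately show ?thesis unfolding hedgeh_def by blast
qed

lemma hedgeh_mono:
  "hedgeh \<S> h x \<Longrightarrow> (\<And>S. S \<in> \<S> \<Longrightarrow> h' S \<le> h S) \<Longrightarrow> x \<le> y \<Longrightarrow> hedgeh \<S> h' y"
proof -
  assume a: "hedgeh \<S> h x" "\<And>S. S \<in> \<S> \<Longrightarrow> h' S \<le> h S" "x \<le> y"
  then obtain V n H where V: "pos_gen_portfolio \<S> V n H" "superhedges \<S> (\<lambda>S. ereal (h S)) V n H"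
      "endowment V \<le> ereal x" unfolding hedgeh_def by blast
  have "superhedges \<S> (\<lambda>S. ereal (h' S)) V n H"
    unfolding superhedges_def
  proof
    fix S assume "S \<in> \<S>"
    then have "ereal (h' S) \<le> ereal (h S)" "ereal (h S) \<le> gp_value V n H S"
      using a(2) V(2) unfolding superhedges_def by auto
    then show "ereal (h' S) \<le> gp_value V n H S" by (rule order_trans)
  qed
  moreover have "endowment V \<le> ereal y" using V(3) a(3) by (metis ereal_less_eq(3) order_trans)
  ultimately show ?thesis using V(1) unfolding hedgeh_def by blast
qed


lemma hedgeh_lin:
  assumes ne: "\<S> \<noteq> {}" and h1: "hedgeh \<S> h1 x" and h2: "hedgeh \<S> h2 y" and a: "0 \<le> a" and b: "0 \<le> b"
  shows "hedgeh \<S> (\<lambda>S. a * h1 S + b * h2 S) (a * x + b * y)"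
proof -
  obtain VA nA HA where A: "pos_gen_portfolio \<S> VA nA HA" "superhedges \<S> (\<lambda>S. ereal (h1 S)) VA nA HA"
      "endowment VA \<le> ereal x" using h1 unfolding hedgeh_def by blast
  obtain VB nB HB where B: "pos_gen_portfolio \<S> VB nB HB" "superhedges \<S> (\<lambda>S. ereal (h2 S)) VB nB HB"
      "endowment VB \<le> ereal y" using h2 unfolding hedgeh_def by blast
  define VC where "VC = (\<lambda>m. a * VA m + b * VB m)"
  define nC where "nC = (\<lambda>m. max (nA m) (nB m))"
  define HC where "HC = (\<lambda>m. combH a (nA m) (HA m) b (nB m) (HB m))"
  have wC: "\<And>m j S. wealth (VC m) (nC m) (HC m) j S = a * wealth (VA m) (nA m) (HA m) j S + b * wealth (VB m) (nB m) (HB m) j S"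
    unfolding VC_def nC_def HC_def by (rule wealth_comb)
  have wiC: "\<And>m S. wealth_inf (VC m) (nC m) (HC m) S = a * wealth_inf (VA m) (nA m) (HA m) S + b * wealth_inf (VB m) (nB m) (HB m) S"
    unfolding VC_def nC_def HC_def by (rule wealth_inf_comb)
  have pC: "pos_gen_portfolio \<S> VC nC HC"
  proof -
    have "simple_portfolio \<S> (nC m) (HC m)" for m
      using A(1) B(1) unfolding nC_def HC_def pos_gen_portfolio_def gen_portfolio_def by (blast intro: simple_comb)
    moreover have "positive_sp \<S> (VC m) (nC m) (HC m)" if "m \<ge> 1" for m
    proof -
      define k where "k = m - 1"
      have k: "m = Suc k" using that k_def by simp
      show ?thesis unfolding positive_sp_def wiC
        using pgp_nonneg[OF A(1), where m=k] pgp_nonneg[OF B(1), where m=k] a b k by (simp add: VC_def)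
    qed
    moreover have "wealth (VC 0) (nC 0) (HC 0) j S = 0" if "S \<in> \<S>" for j S
      using A(1) B(1) that unfolding wC pos_gen_portfolio_def by simp
    ultimately show ?thesis unfolding pos_gen_portfolio_def gen_portfolio_def by blast
  qed
  have sA: "(\<Sum>m. ereal (a * u m + b * v m)) = ereal a * (\<Sum>m. ereal (u m)) + ereal b * (\<Sum>m. ereal (v m))"
    if "\<And>m. 0 \<le> u m" "\<And>m. 0 \<le> v m" for u v
  proof -
    have "(\<Sum>m. ereal (a * u m + b * v m)) = (\<Sum>m. ereal a * ereal (u m) + ereal b * ereal (v m))" by simp
    also have "\<dots> = (\<Sum>m. ereal a * ereal (u m)) + (\<Sum>m. ereal b * ereal (v m))"
      using that a b by (intro suminf_add_ereal) auto
    also have "\<dots> = ereal a * (\<Sum>m. ereal (u m)) + ereal b * (\<Sum>m. ereal (v m))"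
    proof -
      have "(\<Sum>m. ereal a * ereal (u m)) = ereal a * (\<Sum>m. ereal (u m))"
        by (rule suminf_cmult_ereal) (use that a in auto)
      moreover have "(\<Sum>m. ereal b * ereal (v m)) = ereal b * (\<Sum>m. ereal (v m))"
        by (rule suminf_cmult_ereal) (use that b in auto)
      ultimately show ?thesis by simp
    qed
    finally show ?thesis .
  qed
  have sC: "superhedges \<S> (\<lambda>S. ereal (a * h1 S + b * h2 S)) VC nC HC"
    unfolding superhedges_def
  proof
    fix S assume S: "S \<in> \<S>"
    have "ereal (a * h1 S + b * h2 S) = ereal a * ereal (h1 S) + ereal b * ereal (h2 S)" by simp
    also have "\<dots> \<le> ereal a * (\<Sum>m. ereal (wealth_inf (VA (Suc m)) (nA (Suc m)) (HA (Suc m)) S))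
          + ereal b * (\<Sum>m. ereal (wealth_inf (VB (Suc m)) (nB (Suc m)) (HB (Suc m)) S))"
      using superhedge_pgp[OF A(1,2) S] superhedge_pgp[OF B(1,2) S] a b
      by (intro add_mono ereal_mult_left_mono) auto
    also have "\<dots> = (\<Sum>m. ereal (wealth_inf (VC (Suc m)) (nC (Suc m)) (HC (Suc m)) S))"
      unfolding wiC using pgp_nonneg(2)[OF A(1) S] pgp_nonneg(2)[OF B(1) S] by (intro sA[symmetric])
    also have "\<dots> = gp_value VC nC HC S"
      using pgp_w0[OF pC S] by (simp add: gp_value_def zero_ereal_def[symmetric])
    finally show "ereal (a * h1 S + b * h2 S) \<le> gp_value VC nC HC S" .
  qed
  have "endowment VC = (\<Sum>m. ereal (VC (Suc m)))" by (rule endow_pgp[OF ne pC])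
  also have "\<dots> = ereal a * (\<Sum>m. ereal (VA (Suc m))) + ereal b * (\<Sum>m. ereal (VB (Suc m)))"
    unfolding VC_def using pgp_nonneg(1)[OF A(1)] pgp_nonneg(1)[OF B(1)] by (intro sA)
  also have "\<dots> \<le> ereal a * ereal x + ereal b * ereal y"
    using A(3) B(3) a b unfolding endow_pgp[OF ne A(1)] endow_pgp[OF ne B(1)]
    by (intro add_mono ereal_mult_left_mono) auto
  also have "\<dots> = ereal (a * x + b * y)" by simp
  finally show ?thesis using pC sC unfolding hedgeh_def by blast
qed

lemma KEY:
  assumes sb: "sigma_bar \<S> (\<lambda>S. 0) \<ge> 0" and sp: "simple_portfolio \<S> n H"
    and g: "\<And>S. S \<in> \<S> \<Longrightarrow> g S = wealth_inf V n H S"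
    and hh: "hedgeh \<S> h x" and pos: "\<And>S. S \<in> \<S> \<Longrightarrow> 0 \<le> g S + h S"
  shows "0 \<le> V + x"
proof -
  have ne: "\<S> \<noteq> {}" by (rule nonempty[OF sb])
  obtain VW nW HW where W: "pos_gen_portfolio \<S> VW nW HW" "superhedges \<S> (\<lambda>S. ereal (h S)) VW nW HW"
      "endowment VW \<le> ereal x" using hh unfolding hedgeh_def by blast
  define VG where "VG = (\<lambda>m. if m = 0 then V else VW m)"
  define nG where "nG = (\<lambda>m. if m = 0 then n else nW m)"
  define HG where "HG = (\<lambda>m. if m = 0 then H else HW m)"
  have gG: "gen_portfolio \<S> VG nG HG"
    using W(1) sp unfolding gen_portfolio_def pos_gen_portfolio_def VG_def nG_def HG_def by auto
  have sG: "superhedges \<S> (\<lambda>S. 0) VG nG HG"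
    unfolding superhedges_def
  proof
    fix S assume S: "S \<in> \<S>"
    have "0 = ereal (g S + - g S)" by simp
    also have "\<dots> \<le> ereal (g S + h S)" using pos[OF S] by simp
    also have "\<dots> = ereal (g S) + ereal (h S)" by simp
    also have "\<dots> \<le> ereal (g S) + (\<Sum>m. ereal (wealth_inf (VW (Suc m)) (nW (Suc m)) (HW (Suc m)) S))"
      using superhedge_pgp[OF W(1,2) S] by (intro add_mono) auto
    also have "\<dots> = gp_value VG nG HG S"
      using g[OF S] by (simp add: gp_value_def VG_def nG_def HG_def)
    finally show "0 \<le> gp_value VG nG HG S" .
  qed
  have "sigma_bar \<S> (\<lambda>S. 0) \<le> endowment VG"
    unfolding sigma_bar_def by (rule Inf_lower) (use gG sG in blast)
  with sb have "0 \<le> endowment VG" by (rule order_trans)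
  also have "endowment VG = ereal V + endowment VW"
    unfolding endow_pgp[OF ne W(1)] by (simp add: endowment_def VG_def)
  also have "\<dots> \<le> ereal V + ereal x" using W(3) by (intro add_mono) auto
  finally show ?thesis by simp
qed


definition rep :: "traj set \<Rightarrow> (traj \<Rightarrow> real) \<Rightarrow> real \<Rightarrow> bool" where
  "rep \<S> f V \<longleftrightarrow> (\<exists>n H. simple_portfolio \<S> n H \<and> (\<forall>S\<in>\<S>. f S = wealth_inf V n H S))"

lemma in_E_rep: "in_E \<S> f \<longleftrightarrow> (\<exists>V. rep \<S> f V)"
  unfolding in_E_def rep_def by blast

lemma rep_comb: "rep \<S> f V \<Longrightarrow> rep \<S> g W \<Longrightarrow> rep \<S> (\<lambda>S. a * f S + b * g S) (a * V + b * W)"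
proof -
  assume "rep \<S> f V" "rep \<S> g W"
  then obtain n H n' H' where a: "simple_portfolio \<S> n H" "\<forall>S\<in>\<S>. f S = wealth_inf V n H S"
    "simple_portfolio \<S> n' H'" "\<forall>S\<in>\<S>. g S = wealth_inf W n' H' S" unfolding rep_def by blast
  show ?thesis unfolding rep_def
    by (intro exI[of _ "max n n'"] exI[of _ "combH a n H b n' H'"] conjI simple_comb a(1,3))
       (simp add: wealth_inf_comb a(2,4))
qed

lemma rep_const: "rep \<S> (\<lambda>S. c) c"
  unfolding rep_def
  by (rule exI[of _ 1], rule exI[of _ "\<lambda>_ _. 0"])
     (simp add: simple_portfolio_def nonanticipating_def wealth_inf_def wealth_def)

lemma rep_KEY:
  assumes sb: "sigma_bar \<S> (\<lambda>S. 0) \<ge> 0" and "rep \<S> g V" "hedgeh \<S> h x" "\<And>S. S \<in> \<S> \<Longrightarrow> 0 \<le> g S + h S"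
  shows "0 \<le> V + x"
proof -
  obtain n H where "simple_portfolio \<S> n H" "\<forall>S\<in>\<S>. g S = wealth_inf V n H S"
    using assms(2) unfolding rep_def by blast
  then show ?thesis using KEY[OF sb _ _ assms(3,4)] by blast
qed

lemma rep_unique:
  assumes sb: "sigma_bar \<S> (\<lambda>S. 0) \<ge> 0" and r1: "rep \<S> f V" and r2: "rep \<S> f W"
  shows "V = W"
proof -
  have z: "hedgeh \<S> (\<lambda>S. 0) 0" by (rule hedgeh_zero) auto
  have "0 \<le> 1 * V + (-1) * W + 0"
    by (rule rep_KEY[OF sb rep_comb[OF r1 r2] z]) simp
  moreover have "0 \<le> 1 * W + (-1) * V + 0"
    by (rule rep_KEY[OF sb rep_comb[OF r2 r1] z]) simp
  ultimately show ?thesis by simp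
qed

lemma IE_eq:
  assumes sb: "sigma_bar \<S> (\<lambda>S. 0) \<ge> 0" and r: "rep \<S> f V"
  shows "I_E \<S> f = V"
  unfolding I_E_def
proof (rule the_equality)
  show "\<exists>n H. simple_portfolio \<S> n H \<and> (\<forall>S\<in>\<S>. f S = wealth_inf V n H S)"
    using r unfolding rep_def .
next
  fix W assume "\<exists>n H. simple_portfolio \<S> n H \<and> (\<forall>S\<in>\<S>. f S = wealth_inf W n H S)"
  then have "rep \<S> f W" unfolding rep_def .
  then show "W = V" using rep_unique[OF sb r] by simp
qed

lemma BOUND:
  assumes sb: "sigma_bar \<S> (\<lambda>S. 0) \<ge> 0" and r1: "rep \<S> g1 V1" and r2: "rep \<S> g2 V2"
    and h: "hedgeh \<S> (\<lambda>S. \<bar>g1 S - g2 S\<bar>) x"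
  shows "\<bar>V1 - V2\<bar> \<le> x"
proof -
  have "0 \<le> 1 * V1 + (-1) * V2 + x"
    by (rule rep_KEY[OF sb rep_comb[OF r1 r2] h]) simp
  moreover have "0 \<le> 1 * V2 + (-1) * V1 + x"
    by (rule rep_KEY[OF sb rep_comb[OF r2 r1] h]) simp
  ultimately show ?thesis by simp
qed

lemma hedgeh_tri:
  assumes ne: "\<S> \<noteq> {}" and "hedgeh \<S> h1 x" "hedgeh \<S> h2 y" "\<And>S. S \<in> \<S> \<Longrightarrow> h S \<le> h1 S + h2 S"
  shows "hedgeh \<S> h (x + y)"
proof -
  have "hedgeh \<S> (\<lambda>S. 1 * h1 S + 1 * h2 S) (1 * x + 1 * y)"
    by (rule hedgeh_lin[OF ne assms(2,3)]) auto
  then show ?thesis by (rule hedgeh_mono) (use assms(4) in auto)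
qed

lemma hedgeh_nonneg:
  assumes ne: "\<S> \<noteq> {}" and "hedgeh \<S> h x"
  shows "0 \<le> x"
proof -
  obtain V n H where "pos_gen_portfolio \<S> V n H" "endowment V \<le> ereal x"
    using assms(2) unfolding hedgeh_def by blast
  moreover have "0 \<le> (\<Sum>m. ereal (V (Suc m)))"
    using pgp_nonneg(1)[OF calculation(1)] by (intro suminf_0_le) auto
  ultimately have "(0::ereal) \<le> ereal x" using endow_pgp[OF ne] by (metis dual_order.trans)
  then show ?thesis by simp
qed

lemma normL_nonneg:
  assumes ne: "\<S> \<noteq> {}"
  shows "0 \<le> normL \<S> f"
  unfolding normL_def Ibar_def
proof (rule Inf_greatest, clarify)
  fix V n H assume "pos_gen_portfolio \<S> V n H"
  then show "0 \<le> endowment V"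
  proof -
    have "0 \<le> (\<Sum>m. ereal (V (Suc m)))"
      using pgp_nonneg(1)[OF \<open>pos_gen_portfolio \<S> V n H\<close>] by (intro suminf_0_le) auto
    then show ?thesis using endow_pgp[OF ne \<open>pos_gen_portfolio \<S> V n H\<close>] by simp
  qed
qed

lemma normL_lt:
  assumes "normL \<S> f < ereal e"
  shows "\<exists>d<e. hedgeh \<S> (\<lambda>S. \<bar>f S\<bar>) d"
proof -
  obtain V n H where V: "pos_gen_portfolio \<S> V n H" "superhedges \<S> (\<lambda>S. ereal \<bar>f S\<bar>) V n H"
    "endowment V < ereal e"
    using assms unfolding normL_def Ibar_def by (auto simp: Inf_less_iff)
  show ?thesis
  proof (cases "endowment V")
    case (real r)
    have "hedgeh \<S> (\<lambda>S. \<bar>f S\<bar>) r" unfolding hedgeh_def using V real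
      by (intro exI[of _ V] exI[of _ n] exI[of _ H]) simp
    then show ?thesis using V real by auto
  next
    case PInf then show ?thesis using V by simp
  next
    case MInf
    have "hedgeh \<S> (\<lambda>S. \<bar>f S\<bar>) (e - 1)" unfolding hedgeh_def using V MInf
      by (intro exI[of _ V] exI[of _ n] exI[of _ H]) simp
    moreover have "e - 1 < e" by simp
    ultimately show ?thesis by blast
  qed
qed

lemma hedge_normL: "hedgeh \<S> (\<lambda>S. \<bar>f S\<bar>) x \<Longrightarrow> normL \<S> f \<le> ereal x"
proof -
  assume "hedgeh \<S> (\<lambda>S. \<bar>f S\<bar>) x"
  then obtain V n H where V: "pos_gen_portfolio \<S> V n H" "superhedges \<S> (\<lambda>S. ereal \<bar>f S\<bar>) V n H"
      "endowment V \<le> ereal x" unfolding hedgeh_def by blast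
  have "normL \<S> f \<le> endowment V" unfolding normL_def Ibar_def
    by (rule Inf_lower) (use V in blast)
  then show ?thesis using V(3) by (rule order_trans)
qed

lemma normL_fin: "normL \<S> f < \<infinity> \<Longrightarrow> \<exists>x. hedgeh \<S> (\<lambda>S. \<bar>f S\<bar>) x"
proof (cases "normL \<S> f")
  case (real r)
  then have "normL \<S> f < ereal (r + 1)" by simp
  then show ?thesis using normL_lt by blast
next
  case MInf
  then have "normL \<S> f < ereal 0" by simp
  then show ?thesis using normL_lt by blast
qed simp

lemma in_E'I: "rep \<S> g V \<Longrightarrow> hedgeh \<S> (\<lambda>S. \<bar>g S\<bar>) x \<Longrightarrow> in_E' \<S> g"
proof -
  assume a: "rep \<S> g V" "hedgeh \<S> (\<lambda>S. \<bar>g S\<bar>) x"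
  have "normL \<S> g \<le> ereal x" by (rule hedge_normL[OF a(2)])
  then have "normL \<S> g < \<infinity>" by (rule order_le_less_trans) simp
  then show ?thesis unfolding in_E'_def in_E_rep using a(1) by blast
qed

lemma L1_approx:
  assumes "L1_L \<S> f" "0 < e"
  shows "\<exists>g V. in_E' \<S> g \<and> rep \<S> g V \<and> hedgeh \<S> (\<lambda>S. \<bar>f S - g S\<bar>) e"
proof -
  obtain g where g: "in_E' \<S> g" "normL \<S> (\<lambda>S. f S - g S) < ereal e"
    using assms unfolding L1_L_def by blast
  obtain d where "d < e" "hedgeh \<S> (\<lambda>S. \<bar>f S - g S\<bar>) d" using normL_lt[OF g(2)] by blast
  then have "hedgeh \<S> (\<lambda>S. \<bar>f S - g S\<bar>) e"
    using hedgeh_mono[of \<S> "\<lambda>S. \<bar>f S - g S\<bar>" d "\<lambda>S. \<bar>f S - g S\<bar>" e] by simp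
  moreover obtain V where "rep \<S> g V" using g(1) unfolding in_E'_def in_E_rep by blast
  ultimately show ?thesis using g(1) by blast
qed


lemma INT:
  assumes sb: "sigma_bar \<S> (\<lambda>S. 0) \<ge> 0" and f: "L1_L \<S> f"
  shows "\<forall>g V x. rep \<S> g V \<longrightarrow> hedgeh \<S> (\<lambda>S. \<bar>f S - g S\<bar>) x \<longrightarrow> \<bar>integral_L \<S> f - V\<bar> \<le> x"
proof -
  have ne: "\<S> \<noteq> {}" by (rule nonempty[OF sb])
  have "\<forall>k. \<exists>g V. in_E' \<S> g \<and> rep \<S> g V \<and> hedgeh \<S> (\<lambda>S. \<bar>f S - g S\<bar>) (1 / real (Suc k))"
    using L1_approx[OF f] by simp
  then obtain G where "\<forall>k. \<exists>V. in_E' \<S> (G k) \<and> rep \<S> (G k) V \<and> hedgeh \<S> (\<lambda>S. \<bar>f S - G k S\<bar>) (1 / real (Suc k))"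
    using choice[of "\<lambda>k g. \<exists>V. in_E' \<S> g \<and> rep \<S> g V \<and> hedgeh \<S> (\<lambda>S. \<bar>f S - g S\<bar>) (1 / real (Suc k))"] by blast
  then obtain u where "\<forall>k. in_E' \<S> (G k) \<and> rep \<S> (G k) (u k) \<and> hedgeh \<S> (\<lambda>S. \<bar>f S - G k S\<bar>) (1 / real (Suc k))"
    using choice[of "\<lambda>k V. in_E' \<S> (G k) \<and> rep \<S> (G k) V \<and> hedgeh \<S> (\<lambda>S. \<bar>f S - G k S\<bar>) (1 / real (Suc k))"] by blast
  then have G: "\<And>k. in_E' \<S> (G k)" "\<And>k. rep \<S> (G k) (u k)"
    "\<And>k. hedgeh \<S> (\<lambda>S. \<bar>f S - G k S\<bar>) (1 / real (Suc k))" by auto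
  have diff: "\<bar>u k - V\<bar> \<le> 1 / real (Suc k) + x" if "rep \<S> g V" "hedgeh \<S> (\<lambda>S. \<bar>f S - g S\<bar>) x" for k g V x
  proof -
    have "hedgeh \<S> (\<lambda>S. \<bar>G k S - g S\<bar>) (1 / real (Suc k) + x)"
      by (rule hedgeh_tri[OF ne G(3)[of k] that(2)]) auto
    then show ?thesis by (rule BOUND[OF sb G(2) that(1)])
  qed
  have small: "\<exists>M. \<forall>k\<ge>M. 1 / real (Suc k) < e" if e0: "0 < e" for e :: real
  proof -
    obtain M where M: "inverse (real (Suc M)) < e" using reals_Archimedean[OF e0] by blast
    have "1 / real (Suc k) < e" if "k \<ge> M" for k
    proof -
      have "real (Suc M) \<le> real (Suc k)" using that by simp
      then have "inverse (real (Suc k)) \<le> inverse (real (Suc M))" by (rule le_imp_inverse_le) simp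
      then show ?thesis using M unfolding inverse_eq_divide by linarith
    qed
    then show ?thesis by blast
  qed
  have "Cauchy u"
  proof (rule CauchyI)
    fix e :: real assume e: "0 < e"
    obtain M where M: "\<forall>k\<ge>M. 1 / real (Suc k) < e / 2" using small[of "e/2"] e by auto
    have "norm (u m - u n) < e" if "m \<ge> M" "n \<ge> M" for m n
    proof -
      have "\<bar>u m - u n\<bar> \<le> 1 / real (Suc m) + 1 / real (Suc n)"
        by (rule diff[OF G(2)[of n] G(3)[of n]])
      moreover have "1 / real (Suc m) < e / 2" using M that(1) by blast
      moreover have "1 / real (Suc n) < e / 2" using M that(2) by blast
      ultimately show ?thesis unfolding real_norm_def by linarith
    qed
    then show "\<exists>M. \<forall>m\<ge>M. \<forall>n\<ge>M. norm (u m - u n) < e" by blast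
  qed
  then obtain c where c: "u \<longlonglongrightarrow> c" using Cauchy_convergent_iff convergent_def by blast
  have P: "\<bar>c - V\<bar> \<le> x" if r: "rep \<S> g V" and h: "hedgeh \<S> (\<lambda>S. \<bar>f S - g S\<bar>) x" for g V x
  proof (rule field_le_epsilon)
    fix e :: real assume e: "0 < e"
    obtain M where M: "\<forall>k\<ge>M. 1 / real (Suc k) < e / 2" using small[of "e/2"] e by auto
    obtain N where N: "\<forall>k\<ge>N. dist (u k) c < e / 2" using c e unfolding lim_sequentially by (meson half_gt_zero)
    let ?k = "max M N"
    have "\<bar>u ?k - V\<bar> \<le> 1 / real (Suc ?k) + x" by (rule diff[OF r h])
    moreover have "1 / real (Suc ?k) < e / 2" using M by simp
    moreover have "\<bar>u ?k - c\<bar> < e / 2" using N by (simp add: dist_real_def)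
    ultimately show "\<bar>c - V\<bar> \<le> x + e" by linarith
  qed
  have "integral_L \<S> f = c"
    unfolding integral_L_def
  proof (rule the_equality)
    have "(\<lambda>k. normL \<S> (\<lambda>S. f S - G k S)) \<longlonglongrightarrow> 0"
    proof (rule tendsto_sandwich[of "\<lambda>_. 0" _ _ "\<lambda>k. ereal (1 / real (Suc k))"])
      show "\<forall>\<^sub>F n in sequentially. 0 \<le> normL \<S> (\<lambda>S. f S - G n S)"
        using normL_nonneg[OF ne] by simp
      show "\<forall>\<^sub>F n in sequentially. normL \<S> (\<lambda>S. f S - G n S) \<le> ereal (1 / real (Suc n))"
        using hedge_normL[OF G(3)] by simp
      show "(\<lambda>n. 0::ereal) \<longlonglongrightarrow> 0" by simp
      have "(\<lambda>n. 1 / real (Suc n)) \<longlonglongrightarrow> 0"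
        using LIMSEQ_Suc[OF lim_1_over_n] by simp
      then have "(\<lambda>n. ereal (1 / real (Suc n))) \<longlonglongrightarrow> ereal 0" by (rule tendsto_ereal)
      then show "(\<lambda>n. ereal (1 / real (Suc n))) \<longlonglongrightarrow> 0" by (simp add: zero_ereal_def)
    qed
    moreover have "(\<lambda>k. I_E \<S> (G k)) \<longlonglongrightarrow> c"
      using c IE_eq[OF sb G(2)] by simp
    ultimately show "\<exists>g. (\<forall>k. in_E' \<S> (g k)) \<and> ((\<lambda>k. normL \<S> (\<lambda>S. f S - g k S)) \<longlonglongrightarrow> 0) \<and>
        ((\<lambda>k. I_E \<S> (g k)) \<longlonglongrightarrow> c)" using G(1) by blast
  next
    fix d assume "\<exists>g. (\<forall>k. in_E' \<S> (g k)) \<and> ((\<lambda>k. normL \<S> (\<lambda>S. f S - g k S)) \<longlonglongrightarrow> 0) \<and>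
        ((\<lambda>k. I_E \<S> (g k)) \<longlonglongrightarrow> d)"
    then obtain h where h: "\<And>k. in_E' \<S> (h k)" "(\<lambda>k. normL \<S> (\<lambda>S. f S - h k S)) \<longlonglongrightarrow> 0"
      "(\<lambda>k. I_E \<S> (h k)) \<longlonglongrightarrow> d" by blast
    have "\<bar>d - c\<bar> \<le> 0"
    proof (rule field_le_epsilon)
      fix e :: real assume e: "0 < e"
      have "\<forall>\<^sub>F k in sequentially. normL \<S> (\<lambda>S. f S - h k S) < ereal (e / 2)"
        using order_tendstoD(2)[OF h(2), of "ereal (e/2)"] e by simp
      moreover have "\<forall>\<^sub>F k in sequentially. dist (I_E \<S> (h k)) d < e / 2"
        using h(3) e tendstoD half_gt_zero by blast
      ultimately have "\<forall>\<^sub>F k in sequentially. normL \<S> (\<lambda>S. f S - h k S) < ereal (e / 2) \<and> dist (I_E \<S> (h k)) d < e / 2"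
        by (rule eventually_conj)
      then obtain k where k: "normL \<S> (\<lambda>S. f S - h k S) < ereal (e / 2)" "dist (I_E \<S> (h k)) d < e / 2"
        unfolding eventually_sequentially by blast
      obtain dd where dd: "dd < e / 2" "hedgeh \<S> (\<lambda>S. \<bar>f S - h k S\<bar>) dd" using normL_lt[OF k(1)] by blast
      obtain W where W: "rep \<S> (h k) W" using h(1)[of k] unfolding in_E'_def in_E_rep by blast
      have "\<bar>c - W\<bar> \<le> dd" by (rule P[OF W dd(2)])
      moreover have "I_E \<S> (h k) = W" by (rule IE_eq[OF sb W])
      ultimately have "\<bar>c - W\<bar> \<le> dd" "\<bar>W - d\<bar> < e / 2" using k(2) by (simp_all add: dist_real_def)
      then show "\<bar>d - c\<bar> \<le> 0 + e" using dd(1) by linarith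
    qed
    then show "d = c" by simp
  qed
  then show ?thesis using P by blast
qed


lemma abs_lin_le: "\<bar>a * x + b * y\<bar> \<le> \<bar>a\<bar> * \<bar>x\<bar> + \<bar>b\<bar> * \<bar>y::real\<bar>"
  using abs_triangle_ineq[of "a*x" "b*y"] by (simp add: abs_mult)

lemma hedge_lin_abs:
  assumes ne: "\<S> \<noteq> {}" and "hedgeh \<S> (\<lambda>S. \<bar>f S\<bar>) x" "hedgeh \<S> (\<lambda>S. \<bar>g S\<bar>) y"
  shows "hedgeh \<S> (\<lambda>S. \<bar>a * f S + b * g S\<bar>) (\<bar>a\<bar> * x + \<bar>b\<bar> * y)"
proof -
  have "hedgeh \<S> (\<lambda>S. \<bar>a\<bar> * \<bar>f S\<bar> + \<bar>b\<bar> * \<bar>g S\<bar>) (\<bar>a\<bar> * x + \<bar>b\<bar> * y)"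
    by (rule hedgeh_lin[OF ne assms(2,3)]) auto
  then show ?thesis by (rule hedgeh_mono) (auto intro: abs_lin_le)
qed

lemma LIN_APPROX:
  assumes sb: "sigma_bar \<S> (\<lambda>S. 0) \<ge> 0" and f: "L1_L \<S> f" and g: "L1_L \<S> g" and eta: "0 < \<eta>"
  shows "\<exists>f' g' V W. rep \<S> f' V \<and> rep \<S> g' W \<and> hedgeh \<S> (\<lambda>S. \<bar>f S - f' S\<bar>) \<eta>
     \<and> hedgeh \<S> (\<lambda>S. \<bar>g S - g' S\<bar>) \<eta> \<and> in_E' \<S> (\<lambda>S. a * f' S + b * g' S)
     \<and> hedgeh \<S> (\<lambda>S. \<bar>(a * f S + b * g S) - (a * f' S + b * g' S)\<bar>) ((\<bar>a\<bar> + \<bar>b\<bar>) * \<eta>)"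
proof -
  have ne: "\<S> \<noteq> {}" by (rule nonempty[OF sb])
  obtain f' V where F: "in_E' \<S> f'" "rep \<S> f' V" "hedgeh \<S> (\<lambda>S. \<bar>f S - f' S\<bar>) \<eta>"
    using L1_approx[OF f eta] by blast
  obtain g' W where G: "in_E' \<S> g'" "rep \<S> g' W" "hedgeh \<S> (\<lambda>S. \<bar>g S - g' S\<bar>) \<eta>"
    using L1_approx[OF g eta] by blast
  obtain x where x: "hedgeh \<S> (\<lambda>S. \<bar>f' S\<bar>) x" using F(1) normL_fin unfolding in_E'_def by blast
  obtain y where y: "hedgeh \<S> (\<lambda>S. \<bar>g' S\<bar>) y" using G(1) normL_fin unfolding in_E'_def by blast
  have "in_E' \<S> (\<lambda>S. a * f' S + b * g' S)"
    by (rule in_E'I[OF rep_comb[OF F(2) G(2)] hedge_lin_abs[OF ne x y]])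
  moreover have "hedgeh \<S> (\<lambda>S. \<bar>(a * f S + b * g S) - (a * f' S + b * g' S)\<bar>) ((\<bar>a\<bar> + \<bar>b\<bar>) * \<eta>)"
  proof -
    have "hedgeh \<S> (\<lambda>S. \<bar>a * (f S - f' S) + b * (g S - g' S)\<bar>) (\<bar>a\<bar> * \<eta> + \<bar>b\<bar> * \<eta>)"
      by (rule hedge_lin_abs[OF ne F(3) G(3)])
    then show ?thesis by (rule hedgeh_mono) (auto simp: algebra_simps)
  qed
  ultimately show ?thesis using F G by blast
qed

theorem proposition3p4:
  fixes s0 :: real and \<S> :: "(nat \<Rightarrow> real) set"
  assumes "trajectory_set s0 \<S>"
    and "sigma_bar \<S> (\<lambda>S. 0) \<ge> 0"
  shows "(\<forall>f g a b. L1_L \<S> f \<and> L1_L \<S> g \<longrightarrow>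
            L1_L \<S> (\<lambda>S. a * f S + b * g S) \<and>
            integral_L \<S> (\<lambda>S. a * f S + b * g S) = a * integral_L \<S> f + b * integral_L \<S> g)
       \<and> (\<forall>f. L1_L \<S> f \<and> (\<forall>S\<in>\<S>. f S \<ge> 0) \<longrightarrow> integral_L \<S> f \<ge> 0)
       \<and> (\<forall>f. L1_L \<S> f \<longrightarrow> (\<forall>\<epsilon>>0. \<exists>\<delta>>0. \<forall>g. L1_L \<S> g \<and> normL \<S> (\<lambda>S. g S - f S) < ereal \<delta>
                \<longrightarrow> \<bar>integral_L \<S> g - integral_L \<S> f\<bar> < \<epsilon>))
       \<and> (\<forall>c::real. L1_L \<S> (\<lambda>S. c) \<and> integral_L \<S> (\<lambda>S. c) = c)"
proof -
  note sb = assms(2)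
  have ne: "\<S> \<noteq> {}" by (rule nonempty[OF sb])
  have P1: "L1_L \<S> (\<lambda>S. a * f S + b * g S) \<and>
            integral_L \<S> (\<lambda>S. a * f S + b * g S) = a * integral_L \<S> f + b * integral_L \<S> g"
    if f: "L1_L \<S> f" and g: "L1_L \<S> g" for f g a b
  proof -
    let ?F = "\<lambda>S. a * f S + b * g S"
    define K where "K = \<bar>a\<bar> + \<bar>b\<bar> + 1"
    have K: "0 < K" unfolding K_def by simp
    have L1F: "L1_L \<S> ?F"
      unfolding L1_L_def
    proof (intro conjI allI impI)
      obtain x where x: "hedgeh \<S> (\<lambda>S. \<bar>f S\<bar>) x" using f normL_fin unfolding L1_L_def by blast
      obtain y where y: "hedgeh \<S> (\<lambda>S. \<bar>g S\<bar>) y" using g normL_fin unfolding L1_L_def by blast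
      have "normL \<S> ?F \<le> ereal (\<bar>a\<bar> * x + \<bar>b\<bar> * y)"
        by (rule hedge_normL[OF hedge_lin_abs[OF ne x y]])
      then show "normL \<S> ?F < \<infinity>" by (rule order_le_less_trans) simp
    next
      fix e :: real assume e: "0 < e"
      define \<eta> where "\<eta> = e / (2 * K)"
      have eta: "0 < \<eta>" unfolding \<eta>_def using e K by simp
      have Keta: "K * \<eta> = e / 2" unfolding \<eta>_def using K by simp
      have lt: "(\<bar>a\<bar> + \<bar>b\<bar>) * \<eta> < e"
      proof -
        have "(\<bar>a\<bar> + \<bar>b\<bar>) * \<eta> = K * \<eta> - \<eta>" unfolding K_def by (simp add: algebra_simps)
        then show ?thesis using Keta eta e by linarith
      qed
      obtain f' g' V W where A: "in_E' \<S> (\<lambda>S. a * f' S + b * g' S)"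
        "hedgeh \<S> (\<lambda>S. \<bar>(a * f S + b * g S) - (a * f' S + b * g' S)\<bar>) ((\<bar>a\<bar> + \<bar>b\<bar>) * \<eta>)"
        using LIN_APPROX[OF sb f g eta, of a b] by blast
      have "normL \<S> (\<lambda>S. ?F S - (a * f' S + b * g' S)) \<le> ereal ((\<bar>a\<bar> + \<bar>b\<bar>) * \<eta>)"
        by (rule hedge_normL[OF A(2)])
      also have "\<dots> < ereal e" using lt by simp
      finally show "\<exists>g0. in_E' \<S> g0 \<and> normL \<S> (\<lambda>S. ?F S - g0 S) < ereal e" using A(1) by blast
    qed
    have "\<bar>integral_L \<S> ?F - (a * integral_L \<S> f + b * integral_L \<S> g)\<bar> \<le> 0"
    proof (rule field_le_epsilon)
      fix e :: real assume e: "0 < e"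
      define \<eta> where "\<eta> = e / (2 * K)"
      have eta: "0 < \<eta>" unfolding \<eta>_def using e K by simp
      have Keta: "K * \<eta> = e / 2" unfolding \<eta>_def using K by simp
      obtain f' g' V W where A: "rep \<S> f' V" "rep \<S> g' W" "hedgeh \<S> (\<lambda>S. \<bar>f S - f' S\<bar>) \<eta>"
        "hedgeh \<S> (\<lambda>S. \<bar>g S - g' S\<bar>) \<eta>"
        "hedgeh \<S> (\<lambda>S. \<bar>(a * f S + b * g S) - (a * f' S + b * g' S)\<bar>) ((\<bar>a\<bar> + \<bar>b\<bar>) * \<eta>)"
        using LIN_APPROX[OF sb f g eta, of a b] by blast
      have 1: "\<bar>integral_L \<S> ?F - (a * V + b * W)\<bar> \<le> (\<bar>a\<bar> + \<bar>b\<bar>) * \<eta>"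
        using INT[OF sb L1F] rep_comb[OF A(1,2)] A(5) by blast
      have 2: "\<bar>integral_L \<S> f - V\<bar> \<le> \<eta>" using INT[OF sb f] A(1,3) by blast
      have 3: "\<bar>integral_L \<S> g - W\<bar> \<le> \<eta>" using INT[OF sb g] A(2,4) by blast
      have 4: "\<bar>a * integral_L \<S> f - a * V\<bar> \<le> \<bar>a\<bar> * \<eta>"
      proof -
        have "\<bar>a * integral_L \<S> f - a * V\<bar> = \<bar>a\<bar> * \<bar>integral_L \<S> f - V\<bar>"
          by (simp add: abs_mult[symmetric] algebra_simps)
        also have "\<dots> \<le> \<bar>a\<bar> * \<eta>" using 2 by (intro mult_left_mono) auto
        finally show ?thesis .
      qed
      have 5: "\<bar>b * integral_L \<S> g - b * W\<bar> \<le> \<bar>b\<bar> * \<eta>"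
      proof -
        have "\<bar>b * integral_L \<S> g - b * W\<bar> = \<bar>b\<bar> * \<bar>integral_L \<S> g - W\<bar>"
          by (simp add: abs_mult[symmetric] algebra_simps)
        also have "\<dots> \<le> \<bar>b\<bar> * \<eta>" using 3 by (intro mult_left_mono) auto
        finally show ?thesis .
      qed
      have 6: "2 * ((\<bar>a\<bar> + \<bar>b\<bar>) * \<eta>) \<le> e"
      proof -
        have "(\<bar>a\<bar> + \<bar>b\<bar>) * \<eta> = K * \<eta> - \<eta>" unfolding K_def by (simp add: algebra_simps)
        then show ?thesis using Keta eta by linarith
      qed
      have 7: "(\<bar>a\<bar> + \<bar>b\<bar>) * \<eta> = \<bar>a\<bar> * \<eta> + \<bar>b\<bar> * \<eta>" by (simp add: algebra_simps)
      show "\<bar>integral_L \<S> ?F - (a * integral_L \<S> f + b * integral_L \<S> g)\<bar> \<le> 0 + e"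
        using 1 4 5 6 7 unfolding abs_le_iff by linarith
    qed
    then show ?thesis using L1F by simp
  qed
  have P2: "integral_L \<S> f \<ge> 0" if f: "L1_L \<S> f" and pos: "\<forall>S\<in>\<S>. f S \<ge> 0" for f
  proof -
    have "0 \<le> integral_L \<S> f + e" if e: "0 < e" for e
    proof -
      have eta: "0 < e / 2" using e by simp
      obtain g V where A: "rep \<S> g V" "hedgeh \<S> (\<lambda>S. \<bar>f S - g S\<bar>) (e / 2)"
        using L1_approx[OF f eta] by blast
      have "0 \<le> V + e / 2"
        by (rule rep_KEY[OF sb A(1,2)]) (use pos in force)
      moreover have "\<bar>integral_L \<S> f - V\<bar> \<le> e / 2" using INT[OF sb f] A by blast
      ultimately show ?thesis unfolding abs_le_iff by linarith
    qed
    then have "0 \<le> integral_L \<S> f + 0" using field_le_epsilon[of 0 "integral_L \<S> f"] by simp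
    then show ?thesis by simp
  qed
  have P3: "\<exists>\<delta>>0. \<forall>g. L1_L \<S> g \<and> normL \<S> (\<lambda>S. g S - f S) < ereal \<delta>
                \<longrightarrow> \<bar>integral_L \<S> g - integral_L \<S> f\<bar> < \<epsilon>"
    if f: "L1_L \<S> f" and eps: "0 < \<epsilon>" for f \<epsilon>
  proof (intro exI[of _ \<epsilon>] conjI allI impI)
    show "0 < \<epsilon>" by (rule eps)
    fix g assume "L1_L \<S> g \<and> normL \<S> (\<lambda>S. g S - f S) < ereal \<epsilon>"
    then have g: "L1_L \<S> g" and n: "normL \<S> (\<lambda>S. g S - f S) < ereal \<epsilon>" by auto
    obtain d where d: "d < \<epsilon>" "hedgeh \<S> (\<lambda>S. \<bar>g S - f S\<bar>) d" using normL_lt[OF n] by blast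
    define \<eta> where "\<eta> = (\<epsilon> - d) / 3"
    have eta: "0 < \<eta>" unfolding \<eta>_def using d by simp
    obtain f' V where A: "rep \<S> f' V" "hedgeh \<S> (\<lambda>S. \<bar>f S - f' S\<bar>) \<eta>"
      using L1_approx[OF f eta] by blast
    have "hedgeh \<S> (\<lambda>S. \<bar>g S - f' S\<bar>) (d + \<eta>)"
      by (rule hedgeh_tri[OF ne d(2) A(2)]) auto
    then have 1: "\<bar>integral_L \<S> g - V\<bar> \<le> d + \<eta>" using INT[OF sb g] A(1) by blast
    have 2: "\<bar>integral_L \<S> f - V\<bar> \<le> \<eta>" using INT[OF sb f] A by blast
    have 3: "d + 3 * \<eta> = \<epsilon>" unfolding \<eta>_def by (simp add: field_simps)
    show "\<bar>integral_L \<S> g - integral_L \<S> f\<bar> < \<epsilon>"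
      using 1 2 3 eta unfolding abs_le_iff abs_less_iff by linarith
  qed
  have P4: "L1_L \<S> (\<lambda>S. c) \<and> integral_L \<S> (\<lambda>S. c) = c" for c :: real
  proof -
    have hc: "hedgeh \<S> (\<lambda>S. \<bar>c\<bar>) \<bar>c\<bar>" by (rule hedgeh_const) auto
    have z: "hedgeh \<S> (\<lambda>S. \<bar>c - c\<bar>) 0" by (rule hedgeh_zero) auto
    have E: "in_E' \<S> (\<lambda>S. c)" by (rule in_E'I[OF rep_const hc])
    have L: "L1_L \<S> (\<lambda>S. c)"
      unfolding L1_L_def
    proof (intro conjI allI impI)
      have "normL \<S> (\<lambda>S. c) \<le> ereal \<bar>c\<bar>" by (rule hedge_normL[OF hc])
      then show "normL \<S> (\<lambda>S. c) < \<infinity>" by (rule order_le_less_trans) simp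
    next
      fix e :: real assume e: "0 < e"
      have "normL \<S> (\<lambda>S. c - c) \<le> ereal 0" by (rule hedge_normL[OF z])
      also have "\<dots> < ereal e" using e by simp
      finally show "\<exists>g. in_E' \<S> g \<and> normL \<S> (\<lambda>S. c - g S) < ereal e" using E by blast
    qed
    have "\<bar>integral_L \<S> (\<lambda>S. c) - c\<bar> \<le> 0" using INT[OF sb L] rep_const z by blast
    then show ?thesis using L by simp
  qed
  show ?thesis using P1 P2 P3 P4 by blast
qed

end
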